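(* Let $n\ge 3$. If $\mu$ is a symmetric measure on $L_n$ such that $C_{L_n}=C_\mu$, then $C_\mu=\max\{M_1(\mu),C^0_\mu\}$.
   Context: $L_n$ is the path graph with vertices $\{1,\dots,n\}$ and edges $\{j,j+1\}$, with distance $|i-j|$. A measure on $L_n$ is a weight function $\mu:\{1,\dots,n\}\to(0,\infty)$, $\mu(A)=\sum_{v\in A}\mu(v)$; it is symmetric if $\mu(j)=\mu(n+1-j)$ for all $j$. Closed balls: $B(x,r)=\{y:|x-y|\le r\}$. $C_\mu=\sup\{\mu(B(x,2k+1))/\mu(B(x,k)):1\le x\le n,\ k\ge0\}$, $C_{L_n}=\inf_\mu C_\mu$, $C^0_\mu=\max_x\mu(B(x,1))/\mu(x)$, and $M_1(\mu)=\sup\{\mu(B(1,2k+1))/\mu(B(1,k)): k\in\mathbb Z,\ 0\le k<\lceil\frac{n-2}{3}\rceil\}$. *)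

theory Defs
  imports Complex_Main
begin

text \<open>Path graph L_n on vertices {1..n}; a measure is a function positive on {1..n}.\<close>

definition is_measure :: "nat \<Rightarrow> (nat \<Rightarrow> real) \<Rightarrow> bool" where
  "is_measure n \<mu> \<longleftrightarrow> (\<forall>j\<in>{1..n}. \<mu> j > 0)"

definition symmetric_measure :: "nat \<Rightarrow> (nat \<Rightarrow> real) \<Rightarrow> bool" where
  "symmetric_measure n \<mu> \<longleftrightarrow> is_measure n \<mu> \<and> (\<forall>j\<in>{1..n}. \<mu> j = \<mu> (n + 1 - j))"

definition meas :: "(nat \<Rightarrow> real) \<Rightarrow> nat set \<Rightarrow> real" where
  "meas \<mu> A = (\<Sum>v\<in>A. \<mu> v)"

definition ball_L :: "nat \<Rightarrow> nat \<Rightarrow> nat \<Rightarrow> nat set" where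
  "ball_L n x r = {y\<in>{1..n}. \<bar>int x - int y\<bar> \<le> int r}"

definition C_mu :: "nat \<Rightarrow> (nat \<Rightarrow> real) \<Rightarrow> real" where
  "C_mu n \<mu> = Sup {meas \<mu> (ball_L n x (2*k+1)) / meas \<mu> (ball_L n x k) | x k. x \<in> {1..n}}"

definition C_L :: "nat \<Rightarrow> real" where
  "C_L n = Inf {C_mu n \<mu> | \<mu>. is_measure n \<mu>}"

definition C0_mu :: "nat \<Rightarrow> (nat \<Rightarrow> real) \<Rightarrow> real" where
  "C0_mu n \<mu> = Max {meas \<mu> (ball_L n x 1) / \<mu> x | x. x \<in> {1..n}}"

definition M1 :: "nat \<Rightarrow> (nat \<Rightarrow> real) \<Rightarrow> real" where
  "M1 n \<mu> = Sup {meas \<mu> (ball_L n 1 (2*k+1)) / meas \<mu> (ball_L n 1 k) | k::nat.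
                   int k < \<lceil>(real n - 2) / 3\<rceil>}"

end

theory Submission
  imports Defs
begin

definition Rr :: "nat \<Rightarrow> (nat \<Rightarrow> real) \<Rightarrow> nat \<Rightarrow> nat \<Rightarrow> real" where
  "Rr n \<nu> x k = meas \<nu> (ball_L n x (2*k+1)) / meas \<nu> (ball_L n x k)"

lemma C_mu_eq: "C_mu n \<nu> = Sup {Rr n \<nu> x k | x k. x \<in> {1..n}}"
  by (simp add: C_mu_def Rr_def)

lemma ball_interval: "ball_L n x r = {max 1 (x - r) .. min n (x + r)}"
proof (rule set_eqI)
  fix y
  show "y \<in> ball_L n x r \<longleftrightarrow> y \<in> {max 1 (x - r) .. min n (x + r)}"
    unfolding ball_L_def by (simp add: abs_le_iff) arith
qed

lemma ball_big: "x \<in> {1..n} \<Longrightarrow> n \<le> r \<Longrightarrow> ball_L n x r = {1..n}"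
  unfolding ball_interval by (simp add: max_def min_def)

lemma ball_sub: "ball_L n x r \<subseteq> {1..n}"
  unfolding ball_interval by auto

lemma ball_fin: "finite (ball_L n x r)"
  unfolding ball_interval by simp

lemma ball_mem: "x \<in> {1..n} \<Longrightarrow> x \<in> ball_L n x r"
  unfolding ball_interval by auto

lemma ball0: "x \<in> {1..n} \<Longrightarrow> ball_L n x 0 = {x}"
  unfolding ball_interval by (simp add: max_def min_def)

lemma S_sub: "{Rr n \<nu> x k | x k. x \<in> {1..n}} \<subseteq> (\<lambda>p. Rr n \<nu> (fst p) (snd p)) ` ({1..n} \<times> {0..n})"
proof
  fix v assume "v \<in> {Rr n \<nu> x k | x k. x \<in> {1..n}}"
  then obtain x k where v: "v = Rr n \<nu> x k" and x: "x \<in> {1..n}" by blast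
  show "v \<in> (\<lambda>p. Rr n \<nu> (fst p) (snd p)) ` ({1..n} \<times> {0..n})"
  proof (cases "k \<le> n")
    case True thus ?thesis using v x by force
  next
    case False
    hence "Rr n \<nu> x k = Rr n \<nu> x n" using x by (simp add: Rr_def ball_big)
    thus ?thesis using v x by force
  qed
qed

lemma S_fin: "finite {Rr n \<nu> x k | x k. x \<in> {1..n}}"
  by (rule finite_subset[OF S_sub]) auto

lemma S_ne: "1 \<le> n \<Longrightarrow> {Rr n \<nu> x k | x k. x \<in> {1..n}} \<noteq> {}"
  by auto

lemma C_upper: "x \<in> {1..n} \<Longrightarrow> Rr n \<nu> x k \<le> C_mu n \<nu>"
  unfolding C_mu_eq
  by (rule cSup_upper) (use S_fin bdd_above_finite in auto)

lemma C_less: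
  assumes "1 \<le> n" "\<And>x k. x \<in> {1..n} \<Longrightarrow> Rr n \<nu> x k < c"
  shows "C_mu n \<nu> < c"
proof -
  let ?S = "{Rr n \<nu> x k | x k. x \<in> {1..n}}"
  have "Sup ?S = Max ?S" using S_fin S_ne[OF assms(1)] by (rule cSup_eq_Max)
  moreover have "Max ?S \<in> ?S" using S_fin S_ne[OF assms(1)] by (rule Max_in)
  ultimately show ?thesis using assms(2) unfolding C_mu_eq by auto
qed

lemma meas_pos: "is_measure n \<nu> \<Longrightarrow> x \<in> {1..n} \<Longrightarrow> 0 < meas \<nu> (ball_L n x r)"
proof -
  assume a: "is_measure n \<nu>" "x \<in> {1..n}"
  have "\<And>i. i \<in> ball_L n x r \<Longrightarrow> 0 < \<nu> i" using a(1) ball_sub unfolding is_measure_def by blast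
  moreover have "ball_L n x r \<noteq> {}" using ball_mem[OF a(2)] by blast
  ultimately show ?thesis unfolding meas_def by (intro sum_pos ball_fin)
qed

lemma C_nonneg: "is_measure n \<nu> \<Longrightarrow> 1 \<le> n \<Longrightarrow> 0 \<le> C_mu n \<nu>"
proof -
  assume a: "is_measure n \<nu>" "1 \<le> n"
  have "0 \<le> Rr n \<nu> 1 0" unfolding Rr_def using meas_pos[OF a(1), of 1] a(2)
    by (simp add: less_imp_le)
  also have "\<dots> \<le> C_mu n \<nu>" using a(2) by (intro C_upper) auto
  finally show ?thesis .
qed

lemma CL_le: "is_measure n \<nu> \<Longrightarrow> 1 \<le> n \<Longrightarrow> C_L n \<le> C_mu n \<nu>"
  unfolding C_L_def
  by (rule cInf_lower) (auto intro!: bdd_belowI[of _ 0] C_nonneg)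

lemma card_ratio:
  assumes "x \<in> {1..n}" "1 \<le> k"
  shows "3 * card (ball_L n x (2*k+1)) \<le> 7 * card (ball_L n x k)"
proof -
  have x: "1 \<le> x" "x \<le> n" using assms(1) by auto
  show ?thesis unfolding ball_interval card_atLeastAtMost
    using x assms(2) by (auto simp: max_def min_def split: if_splits)
qed


lemma meas_shift:
  assumes "A \<subseteq> {1..n}"
  shows "meas (\<lambda>j. \<mu> j + e) A = meas \<mu> A + e * card A"
proof -
  have "finite A" using assms finite_subset by blast
  thus ?thesis unfolding meas_def by (simp add: sum.distrib mult.commute)
qed

lemma card_ball1: "card (ball_L n x 1) \<le> 3"
  unfolding ball_interval card_atLeastAtMost by (auto simp: max_def min_def split: if_splits)

lemma C0_big:
  assumes n3: "3 \<le> n" and mu: "is_measure n \<mu>" and sym: "\<forall>j\<in>{1..n}. \<mu> j = \<mu> (n + 1 - j)"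
  shows "7/3 < C0_mu n \<mu>"
proof -
  let ?S = "{meas \<mu> (ball_L n x 1) / \<mu> x | x. x \<in> {1..n}}"
  have Seq: "?S = (\<lambda>x. meas \<mu> (ball_L n x 1) / \<mu> x) ` {1..n}" by auto
  have ge: "meas \<mu> (ball_L n x 1) / \<mu> x \<le> C0_mu n \<mu>" if "x \<in> {1..n}" for x
    unfolding C0_mu_def by (rule Max_ge) (use that Seq in auto)
  have pos: "0 < \<mu> i" if "i \<in> {1..n}" for i using mu that unfolding is_measure_def by blast
  show ?thesis
  proof (cases "\<forall>i\<in>{1..n}. \<mu> 1 \<le> \<mu> i")
    case True
    have b1: "ball_L n 1 1 = {1..2}" using n3 unfolding ball_interval by (simp add: min_def)
    have b2: "ball_L n 2 1 = {1..3}" using n3 unfolding ball_interval by (simp add: min_def)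
    have e1: "{1..2::nat} = {1,2}" by auto
    have e2: "{1..3::nat} = {1,2,3}" by auto
    have m1: "meas \<mu> (ball_L n 1 1) = \<mu> 1 + \<mu> 2" unfolding b1 meas_def e1
      by simp
    have m2: "meas \<mu> (ball_L n 2 1) = \<mu> 1 + \<mu> 2 + \<mu> 3" unfolding b2 meas_def e2
      by simp
    have p1: "0 < \<mu> 1" and p2: "0 < \<mu> 2" using pos n3 by auto
    have h3: "\<mu> 1 \<le> \<mu> 3" using True n3 by auto
    show ?thesis
    proof (rule ccontr)
      assume "\<not> ?thesis"
      hence c: "C0_mu n \<mu> \<le> 7/3" by simp
      have "(\<mu> 1 + \<mu> 2) / \<mu> 1 \<le> C0_mu n \<mu>" using ge[of 1] m1 n3 by simp
      hence "(\<mu> 1 + \<mu> 2) / \<mu> 1 \<le> 7/3" using c by linarith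
      hence i1: "\<mu> 1 + \<mu> 2 \<le> 7/3 * \<mu> 1" using p1 by (simp add: pos_divide_le_eq)
      have "(\<mu> 1 + \<mu> 2 + \<mu> 3) / \<mu> 2 \<le> C0_mu n \<mu>" using ge[of 2] m2 n3 by simp
      hence "(\<mu> 1 + \<mu> 2 + \<mu> 3) / \<mu> 2 \<le> 7/3" using c by linarith
      hence i2: "\<mu> 1 + \<mu> 2 + \<mu> 3 \<le> 7/3 * \<mu> 2" using p2 by (simp add: pos_divide_le_eq)
      show False using i1 i2 h3 p1 by linarith
    qed
  next
    case False
    then obtain i where i: "i \<in> {1..n}" "\<mu> i < \<mu> 1" by auto
    have fin: "finite (\<mu> ` {1..n})" by simp
    have ne: "\<mu> ` {1..n} \<noteq> {}" using n3 by auto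
    obtain j where j: "j \<in> {1..n}" "\<mu> j = Min (\<mu> ` {1..n})" using Min_in[OF fin ne] by auto
    have jmin: "\<mu> j \<le> \<mu> l" if "l \<in> {1..n}" for l using j(2) Min_le[OF fin] that by auto
    have "\<mu> j < \<mu> 1" using jmin[OF i(1)] i(2) by simp
    hence j1: "j \<noteq> 1" by auto
    have "\<mu> 1 = \<mu> (n + 1 - 1)" using n3 by (intro sym[rule_format]) auto
    hence "\<mu> n = \<mu> 1" by simp
    hence jn: "j \<noteq> n" using \<open>\<mu> j < \<mu> 1\<close> by auto
    have j2: "2 \<le> j" "j + 1 \<le> n" using j(1) j1 jn by auto
    have mx: "max 1 (j - 1) = j - 1" using j2 by simp
    have mn: "min n (j + 1) = j + 1" using j2 by simp
    have bj: "ball_L n j 1 = {j-1..j+1}" unfolding ball_interval mx mn by simp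
    have sub: "{j-1..j+1} \<subseteq> {1..n}" using j2 by auto
    have "(\<Sum>l\<in>{j-1..j+1}. \<mu> j) \<le> (\<Sum>l\<in>{j-1..j+1}. \<mu> l)"
      by (rule sum_mono) (use sub jmin in auto)
    moreover have "card {j-1..j+1} = 3" using j2 by simp
    ultimately have "3 * \<mu> j \<le> meas \<mu> (ball_L n j 1)" unfolding bj meas_def by simp
    moreover have "0 < \<mu> j" using pos j(1) by auto
    ultimately have "3 \<le> meas \<mu> (ball_L n j 1) / \<mu> j" by (simp add: le_divide_eq)
    thus ?thesis using ge[OF j(1)] by linarith
  qed
qed

theorem proposition6p1:
  fixes n :: nat and \<mu> :: "nat \<Rightarrow> real"
  assumes "n \<ge> 3"
    and "symmetric_measure n \<mu>"
    and "C_L n = C_mu n \<mu>"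
  shows "C_mu n \<mu> = max (M1 n \<mu>) (C0_mu n \<mu>)"
proof -
  have n1: "1 \<le> n" using assms(1) by simp
  have mu: "is_measure n \<mu>" and sym: "\<forall>j\<in>{1..n}. \<mu> j = \<mu> (n + 1 - j)"
    using assms(2) unfolding symmetric_measure_def by auto
  have pos: "0 < \<mu> i" if "i \<in> {1..n}" for i using mu that unfolding is_measure_def by blast
  define C where "C = C_mu n \<mu>"
  let ?S = "{meas \<mu> (ball_L n x 1) / \<mu> x | x. x \<in> {1..n}}"
  have Seq: "?S = (\<lambda>x. meas \<mu> (ball_L n x 1) / \<mu> x) ` {1..n}" by auto
  have C0ge: "meas \<mu> (ball_L n x 1) / \<mu> x \<le> C0_mu n \<mu>" if "x \<in> {1..n}" for x
    unfolding C0_mu_def by (rule Max_ge) (use that Seq in auto)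
  have R0: "Rr n \<mu> x 0 = meas \<mu> (ball_L n x 1) / \<mu> x" if "x \<in> {1..n}" for x
    using that by (simp add: Rr_def ball0 meas_def)
  have C0le: "C0_mu n \<mu> \<le> C"
  proof -
    have "C0_mu n \<mu> \<in> ?S" unfolding C0_mu_def by (rule Max_in) (use Seq n1 in auto)
    then obtain x where x: "x \<in> {1..n}" "C0_mu n \<mu> = meas \<mu> (ball_L n x 1) / \<mu> x" by auto
    thus ?thesis using C_upper[OF x(1), of \<mu> 0] R0[OF x(1)] C_def by simp
  qed
  have M1le: "M1 n \<mu> \<le> C"
    unfolding M1_def
  proof (rule cSup_least)
    have "(0::real) < (real n - 2) / 3" using assms(1) by simp
    hence "int 0 < \<lceil>(real n - 2) / 3\<rceil>" by simp
    thus "{meas \<mu> (ball_L n 1 (2 * k + 1)) / meas \<mu> (ball_L n 1 k) |k. int k < \<lceil>(real n - 2) / 3\<rceil>} \<noteq> {}"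
      by blast
  next
    fix v assume "v \<in> {meas \<mu> (ball_L n 1 (2 * k + 1)) / meas \<mu> (ball_L n 1 k) |k. int k < \<lceil>(real n - 2) / 3\<rceil>}"
    then obtain k where "v = Rr n \<mu> 1 k" unfolding Rr_def by blast
    thus "v \<le> C" using C_upper[of 1 n \<mu> k] n1 C_def by simp
  qed
  have big: "7/3 < C0_mu n \<mu>" using C0_big[OF assms(1) mu sym] .
  have CleC0: "C \<le> C0_mu n \<mu>"
  proof (rule ccontr)
    assume "\<not> C \<le> C0_mu n \<mu>"
    hence lt: "C0_mu n \<mu> < C" by simp
    have fin: "finite (\<mu> ` {1..n})" by simp
    have ne: "\<mu> ` {1..n} \<noteq> {}" using n1 by auto
    define m where "m = Min (\<mu> ` {1..n})"
    have mle: "m \<le> \<mu> x" if "x \<in> {1..n}" for x unfolding m_def using Min_le[OF fin] that by auto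
    have mpos: "0 < m" unfolding m_def using Min_in[OF fin ne] pos by auto
    define e where "e = (C - C0_mu n \<mu>) * m / 3"
    have epos: "0 < e" unfolding e_def using lt mpos by simp
    define \<nu> where "\<nu> = (\<lambda>j. \<mu> j + e)"
    have nu: "is_measure n \<nu>" unfolding is_measure_def \<nu>_def using pos epos
      by (simp add: add_pos_pos)
    have Cbig: "7/3 < C" using big lt by linarith
    have "C_mu n \<nu> < C"
    proof (rule C_less[OF n1])
      fix x k assume x: "x \<in> {1..n}"
      have px: "0 < \<mu> x" using pos x by simp
      show "Rr n \<nu> x k < C"
      proof (cases "k = 0")
        case True
        have c3: "real (card (ball_L n x 1)) \<le> 3" using card_ball1[of n x] by simp
        have "meas \<mu> (ball_L n x 1) / \<mu> x \<le> C0_mu n \<mu>" using C0ge[OF x] .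
        hence a: "meas \<mu> (ball_L n x 1) \<le> C0_mu n \<mu> * \<mu> x" using px by (simp add: divide_le_eq)
        have "meas \<nu> (ball_L n x 1) = meas \<mu> (ball_L n x 1) + e * card (ball_L n x 1)"
          unfolding \<nu>_def by (rule meas_shift[OF ball_sub])
        also have "\<dots> \<le> C0_mu n \<mu> * \<mu> x + e * 3" using a c3 epos
          by (simp add: add_mono mult_left_mono)
        also have "\<dots> \<le> C0_mu n \<mu> * \<mu> x + (C - C0_mu n \<mu>) * \<mu> x"
          unfolding e_def using mle[OF x] lt by (simp add: mult_left_mono)
        also have "\<dots> < C * (\<mu> x + e)" using epos lt big by (simp add: algebra_simps)
        finally have b: "meas \<nu> (ball_L n x 1) < C * (\<mu> x + e)" .
        have "meas \<nu> (ball_L n x 0) = \<mu> x + e" unfolding ball0[OF x] meas_def \<nu>_def by simp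
        thus ?thesis unfolding Rr_def using True b px epos by (simp add: divide_less_eq)
      next
        case False
        let ?B1 = "ball_L n x k" and ?B2 = "ball_L n x (2*k+1)"
        have p1: "0 < meas \<mu> ?B1" using meas_pos[OF mu x] .
        have "Rr n \<mu> x k \<le> C" using C_upper[OF x] C_def by simp
        hence a: "meas \<mu> ?B2 \<le> C * meas \<mu> ?B1" unfolding Rr_def using p1 by (simp add: pos_divide_le_eq)
        have cr: "3 * card ?B2 \<le> 7 * card ?B1" using card_ratio[OF x] False by simp
        have cpos: "0 < card ?B1" using ball_mem[OF x] ball_fin card_gt_0_iff by blast
        have "real (card ?B2) \<le> 7/3 * real (card ?B1)" using cr by linarith
        also have "\<dots> < C * real (card ?B1)" using Cbig cpos by simp
        finally have cc: "real (card ?B2) < C * real (card ?B1)" .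
        have "meas \<nu> ?B2 = meas \<mu> ?B2 + e * card ?B2"
          unfolding \<nu>_def by (rule meas_shift[OF ball_sub])
        also have "\<dots> < C * meas \<mu> ?B1 + e * (C * card ?B1)" using a cc epos
          by (simp add: add_le_less_mono)
        also have "\<dots> = C * (meas \<mu> ?B1 + e * card ?B1)" by (simp add: algebra_simps)
        also have "meas \<mu> ?B1 + e * card ?B1 = meas \<nu> ?B1"
          unfolding \<nu>_def by (rule meas_shift[OF ball_sub, symmetric])
        finally have b: "meas \<nu> ?B2 < C * meas \<nu> ?B1" .
        have "0 < meas \<nu> ?B1" using meas_pos[OF nu x] .
        thus ?thesis unfolding Rr_def using b by (simp add: divide_less_eq)
      qed
    qed
    moreover have "C \<le> C_mu n \<nu>" using CL_le[OF nu n1] assms(3) C_def by simp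
    ultimately show False by simp
  qed
  show ?thesis using C0le M1le CleC0 C_def by simp
qed

end
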